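(* For all $y,y'\in\mathbb{R}^d$, $$\bigl|K(|y'|)y'-K(|y|)y\bigr|\le \sqrt{2(a^2+1)}\,a_0^{-1}\,|y'-y|.$$
   Context: Let $g(s)=a_0+a_1s^{\alpha_1}+\cdots+a_Ns^{\alpha_N}$ for $s\ge 0$, where $N\ge1$, $0<\alpha_1<\dots<\alpha_N$ are fixed numbers and $a_0,\dots,a_N\ge0$ with $a_0>0$, $a_N>0$. Define $K:[0,\infty)\to(0,\infty)$ by $K(\xi)=1/g(s(\xi))$, where $s=s(\xi)\ge0$ is the unique solution of $s\,g(s)=\xi$. Set $a=\alpha_N/(\alpha_N+1)\in(0,1)$. $|\cdot|$ is the Euclidean norm on $\mathbb{R}^d$. *)

theory Defs
  imports "HOL-Analysis.Analysis"
begin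

definition gfun :: "nat \<Rightarrow> (nat \<Rightarrow> real) \<Rightarrow> (nat \<Rightarrow> real) \<Rightarrow> real \<Rightarrow> real" where
  "gfun N c al s = c 0 + (\<Sum>i=1..N. c i * s powr al i)"

definition sfun :: "nat \<Rightarrow> (nat \<Rightarrow> real) \<Rightarrow> (nat \<Rightarrow> real) \<Rightarrow> real \<Rightarrow> real" where
  "sfun N c al xi = (THE s. s \<ge> 0 \<and> s * gfun N c al s = xi)"

definition Kfun :: "nat \<Rightarrow> (nat \<Rightarrow> real) \<Rightarrow> (nat \<Rightarrow> real) \<Rightarrow> real \<Rightarrow> real" where
  "Kfun N c al xi = 1 / gfun N c al (sfun N c al xi)"

end

theory Submission
  imports Defs
begin

lemma term_ineq:
  fixes s s' p A :: real
  assumes "0 \<le> s" "s \<le> s'" "0 < p" "p \<le> A"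
  shows "s * (s' powr p - s powr p) \<le> A * (s' - s) * s' powr p"
proof (cases "s = 0")
  case True
  then show ?thesis using assms by (simp add: mult_nonneg_nonneg)
next
  case False
  then have sp: "s > 0" using assms by simp
  then have s'p: "s' > 0" using assms by simp
  have cv: "convex_on {0<..} (\<lambda>x::real. x powr (1+p))"
    by (rule powr_convex) (use assms in simp)
  have der: "((\<lambda>x::real. x powr (1+p)) has_field_derivative ((1+p) * s' powr ((1+p) - 1))) (at s' within {0<..})"
    using s'p by (auto intro!: derivative_eq_intros)
  have "(1+p) * s' powr ((1+p) - 1) * (s - s') \<le> s powr (1+p) - s' powr (1+p)"
    by (rule convex_on_imp_above_tangent[OF cv _ _ _ der]) (use sp s'p in \<open>auto simp: interior_open\<close>)
  moreover have "s powr (1+p) = s * s powr p" using sp by (simp add: powr_add)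
  moreover have "s' powr (1+p) = s' * s' powr p" using s'p by (simp add: powr_add)
  ultimately have h: "(1+p) * s' powr p * (s - s') \<le> s * s powr p - s' * s' powr p" by simp
  have "s * (s' powr p - s powr p) \<le> p * (s' - s) * s' powr p"
    using h by (simp add: algebra_simps)
  also have "\<dots> \<le> A * (s' - s) * s' powr p"
    using assms by (intro mult_right_mono mult_right_mono) auto
  finally show ?thesis .
qed

locale Kset =
  fixes N :: nat and c al :: "nat \<Rightarrow> real"
  assumes N1: "N \<ge> 1"
    and alp: "\<forall>i\<in>{1..N}. 0 < al i \<and> al i \<le> al N"
    and cnn: "\<forall>i\<le>N. 0 \<le> c i"
    and c0: "0 < c 0"
begin

abbreviation "g \<equiv> gfun N c al"

lemma g_ge: "c 0 \<le> g s"
  unfolding gfun_def using cnn by (auto intro!: sum_nonneg)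

lemma g_mono: assumes "0 \<le> s" "s \<le> s'" shows "g s \<le> g s'"
proof -
  have "(\<Sum>i=1..N. c i * s powr al i) \<le> (\<Sum>i=1..N. c i * s' powr al i)"
  proof (rule sum_mono)
    fix i assume i: "i \<in> {1..N}"
    show "c i * s powr al i \<le> c i * s' powr al i"
    proof -
      have "0 < al i" using alp i by auto
      then show ?thesis using cnn assms i by (intro mult_left_mono powr_mono2) auto
    qed
  qed
  then show ?thesis unfolding gfun_def by simp
qed

lemma strict: assumes "0 \<le> s" "s < s'" shows "s * g s < s' * g s'"
proof -
  have "s * g s < s' * g s" using assms g_ge[of s] c0 by (intro mult_strict_right_mono) auto
  also have "\<dots> \<le> s' * g s'" using assms g_mono[of s s'] by (intro mult_left_mono) auto
  finally show ?thesis .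
qed

lemma cont: "continuous_on {a..b} (\<lambda>s. s * g s)" if "0 \<le> a" for a b
  unfolding gfun_def using alp that
  by (auto intro!: continuous_intros continuous_on_powr')

lemma ex1: assumes "0 \<le> xi" shows "\<exists>!s. s \<ge> 0 \<and> s * g s = xi"
proof -
  have "0 * g 0 \<le> xi" using assms by simp
  moreover have "xi \<le> (xi / c 0) * g (xi / c 0)"
  proof -
    have "xi = (xi / c 0) * c 0" using c0 by simp
    also have "\<dots> \<le> (xi / c 0) * g (xi / c 0)" using g_ge assms c0 by (intro mult_left_mono) auto
    finally show ?thesis .
  qed
  ultimately obtain s where "s \<ge> 0" "s \<le> xi / c 0" "s * g s = xi"
    using IVT'[of "\<lambda>s. s * g s" 0 xi "xi / c 0"] cont[of 0 "xi / c 0"] assms c0 by auto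
  moreover have "t = s" if "t \<ge> 0" "t * g t = xi" for t
    using strict[of s t] strict[of t s] that \<open>s \<ge> 0\<close> \<open>s * g s = xi\<close>
    by (cases t s rule: linorder_cases) auto
  ultimately show ?thesis by blast
qed

abbreviation "sf \<equiv> sfun N c al"

lemma sf: assumes "0 \<le> xi" shows "sf xi \<ge> 0" "sf xi * g (sf xi) = xi"
  using theI'[OF ex1[OF assms]] unfolding sfun_def by auto

lemma sf_mono: assumes "0 \<le> xi" "xi \<le> xi'" shows "sf xi \<le> sf xi'"
proof (rule ccontr)
  assume "\<not> ?thesis"
  then have "sf xi' * g (sf xi') < sf xi * g (sf xi)"
    using strict[of "sf xi'" "sf xi"] sf[of xi] sf[of xi'] assms by auto
  then show False using sf[of xi] sf[of xi'] assms by auto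
qed

lemma Dineq: assumes "0 \<le> s" "s \<le> s'"
  shows "s * (g s' - g s) \<le> al N * (s' - s) * g s'"
proof -
  have "s * (g s' - g s) = (\<Sum>i=1..N. c i * (s * (s' powr al i - s powr al i)))"
    unfolding gfun_def by (simp add: sum_distrib_left algebra_simps sum_subtractf)
  also have "\<dots> \<le> (\<Sum>i=1..N. c i * (al N * (s' - s) * s' powr al i))"
  proof (rule sum_mono)
    fix i assume i: "i \<in> {1..N}"
    have "0 < al i" "al i \<le> al N" using alp i by auto
    then show "c i * (s * (s' powr al i - s powr al i)) \<le> c i * (al N * (s' - s) * s' powr al i)"
      using cnn i assms by (intro mult_left_mono term_ineq) auto
  qed
  also have "\<dots> = al N * (s' - s) * (g s' - c 0)"
    unfolding gfun_def by (simp add: sum_distrib_left algebra_simps)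
  also have "\<dots> \<le> al N * (s' - s) * g s'"
  proof -
    have "0 < al N" using alp N1 by auto
    then show ?thesis using assms c0 by (intro mult_left_mono) auto
  qed
  finally show ?thesis .
qed

abbreviation "K \<equiv> Kfun N c al"

lemma key: assumes "0 \<le> xi" "xi \<le> xi'"
  shows "0 \<le> K xi - K xi'" "xi * (K xi - K xi') \<le> (al N / (al N + 1)) / c 0 * (xi' - xi)"
    "0 < K xi'" "K xi' \<le> 1 / c 0"
proof -
  define s where "s = sf xi"
  define s' where "s' = sf xi'"
  define G where "G = g s"
  define G' where "G' = g s'"
  define A where "A = al N"
  have A: "0 < A" using alp N1 by (auto simp: A_def)
  have s: "0 \<le> s" "s * G = xi" using sf[of xi] assms by (auto simp: s_def G_def)
  have s': "0 \<le> s'" "s' * G' = xi'" using sf[of xi'] assms by (auto simp: s'_def G'_def)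
  have ss: "s \<le> s'" using sf_mono assms by (simp add: s_def s'_def)
  have G: "c 0 \<le> G" "c 0 \<le> G'" "G \<le> G'" using g_ge g_mono[OF s(1) ss] by (auto simp: G_def G'_def)
  have Kx: "K xi = 1 / G" "K xi' = 1 / G'" by (auto simp: Kfun_def G_def G'_def s_def s'_def)
  have D: "s * (G' - G) \<le> A * ((s' - s) * G')" using Dineq[OF s(1) ss] by (simp add: G_def G'_def A_def)
  show "0 \<le> K xi - K xi'" using G c0 Kx by (simp add: frac_le)
  show "0 < K xi'" using G c0 Kx by simp
  show "K xi' \<le> 1 / c 0" using G c0 Kx by (simp add: frac_le)
  define X where "X = s * (G' - G)"
  define Y where "Y = (s' - s) * G'"
  have X0: "0 \<le> X" using s ss G by (simp add: X_def)
  have Y0: "0 \<le> Y" using s ss G c0 by (simp add: Y_def)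
  have XY: "X \<le> A * Y" using D by (simp add: X_def Y_def)
  have lhs: "xi * (K xi - K xi') = X / G'"
  proof -
    have "G > 0" "G' > 0" using G c0 by auto
    then have "s * G * (1 / G - 1 / G') = X / G'" unfolding X_def by (simp add: field_simps)
    then show ?thesis using s(2) Kx by simp
  qed
  have rhs: "xi' - xi = Y + X" using s s' by (simp add: X_def Y_def algebra_simps)
  have "X / G' \<le> X / c 0" using X0 G c0 by (simp add: frac_le)
  also have "\<dots> \<le> (A / (A + 1)) / c 0 * (Y + X)"
  proof -
    have "(A + 1) * X \<le> A * (Y + X)" using XY by (simp add: algebra_simps)
    then have "X \<le> (A / (A + 1)) * (Y + X)" using A by (simp add: field_simps)
    then have "X / c 0 \<le> ((A / (A + 1)) * (Y + X)) / c 0" using c0 by (rule divide_right_mono[OF _ less_imp_le])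
    then show ?thesis by simp
  qed
  finally show "xi * (K xi - K xi') \<le> (al N / (al N + 1)) / c 0 * (xi' - xi)"
    using lhs rhs by (simp add: A_def)
qed

lemma vec:
  fixes y y' :: "'n::real_normed_vector"
  assumes le: "norm y \<le> norm y'"
  shows "norm (K (norm y') *\<^sub>R y' - K (norm y) *\<^sub>R y) \<le> (1 + al N / (al N + 1)) / c 0 * norm (y' - y)"
proof -
  let ?a = "al N / (al N + 1)"
  note k = key[OF norm_ge_zero le]
  have eq: "K (norm y') *\<^sub>R y' - K (norm y) *\<^sub>R y = K (norm y') *\<^sub>R (y' - y) - (K (norm y) - K (norm y')) *\<^sub>R y"
    by (simp add: algebra_simps)
  have "norm (K (norm y') *\<^sub>R y' - K (norm y) *\<^sub>R y) \<le> norm (K (norm y') *\<^sub>R (y' - y)) + norm ((K (norm y) - K (norm y')) *\<^sub>R y)"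
    unfolding eq by (rule norm_triangle_ineq4)
  also have "norm (K (norm y') *\<^sub>R (y' - y)) = K (norm y') * norm (y' - y)" using k(3) by simp
  also have "norm ((K (norm y) - K (norm y')) *\<^sub>R y) = norm y * (K (norm y) - K (norm y'))" using k(1) by simp
  also have "K (norm y') * norm (y' - y) \<le> 1 / c 0 * norm (y' - y)" using k(4) by (rule mult_right_mono) simp
  also have "norm y * (K (norm y) - K (norm y')) \<le> ?a / c 0 * (norm y' - norm y)" by (rule k(2))
  also have "\<dots> \<le> ?a / c 0 * norm (y' - y)"
  proof (rule mult_left_mono)
    show "norm y' - norm y \<le> norm (y' - y)" by (rule norm_triangle_ineq2)
    have "0 < al N" using alp N1 by auto
    then show "0 \<le> ?a / c 0" using c0 by simp
  qed
  finally have f: "norm (K (norm y') *\<^sub>R y' - K (norm y) *\<^sub>R y) \<le> 1 / c 0 * norm (y' - y) + ?a / c 0 * norm (y' - y)" by simp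
  have "(1 + ?a) / c 0 * norm (y' - y) = 1 / c 0 * norm (y' - y) + ?a / c 0 * norm (y' - y)"
    by (simp add: add_divide_distrib distrib_right)
  then show ?thesis using f by linarith
qed

end

lemma sq_bound: fixes a :: real shows "1 + a \<le> sqrt (2 * (a\<^sup>2 + 1))"
proof (rule real_le_rsqrt)
  have "0 \<le> (a - 1)\<^sup>2" by simp
  then show "(1 + a)\<^sup>2 \<le> 2 * (a\<^sup>2 + 1)" by (simp add: power2_eq_square algebra_simps)
qed

theorem proposition2p2:
  fixes N :: nat and c al :: "nat \<Rightarrow> real" and y y' :: "'n::euclidean_space"
  assumes "N \<ge> 1"
    and "0 < al 1"
    and "\<forall>i\<in>{1..<N}. al i < al (Suc i)"
    and "\<forall>i\<le>N. 0 \<le> c i"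
    and "0 < c 0" and "0 < c N"
  shows "norm (Kfun N c al (norm y') *\<^sub>R y' - Kfun N c al (norm y) *\<^sub>R y)
           \<le> sqrt (2 * ((al N / (al N + 1))\<^sup>2 + 1)) / c 0 * norm (y' - y)"
proof -
  have mono: "al i \<le> al j" if "1 \<le> i" "i \<le> j" "j \<le> N" for i j
    using that(2,1,3)
  proof (induction j rule: dec_induct)
    case base then show ?case by simp
  next
    case (step n)
    then have "n \<in> {1..<N}" by auto
    then have "al n < al (Suc n)" using assms(3) by blast
    moreover have "al i \<le> al n" using step by auto
    ultimately show ?case by linarith
  qed
  have alp: "\<forall>i\<in>{1..N}. 0 < al i \<and> al i \<le> al N"
  proof
    fix i assume i: "i \<in> {1..N}"
    then show "0 < al i \<and> al i \<le> al N" using mono[of 1 i] mono[of i N] assms(2) by auto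
  qed
  interpret Kset N c al using assms alp by unfold_locales auto
  let ?a = "al N / (al N + 1)"
  have A: "0 < al N" using alp assms(1) by auto
  have main: "norm (Kfun N c al (norm y') *\<^sub>R y' - Kfun N c al (norm y) *\<^sub>R y) \<le> (1 + ?a) / c 0 * norm (y' - y)"
  proof (cases "norm y \<le> norm y'")
    case True then show ?thesis by (rule vec)
  next
    case False
    then have "norm (Kfun N c al (norm y) *\<^sub>R y - Kfun N c al (norm y') *\<^sub>R y') \<le> (1 + ?a) / c 0 * norm (y - y')"
      by (intro vec) auto
    then show ?thesis by (simp add: norm_minus_commute)
  qed
  also have "\<dots> \<le> sqrt (2 * (?a\<^sup>2 + 1)) / c 0 * norm (y' - y)"
    using sq_bound[of ?a] assms(5) by (intro mult_right_mono divide_right_mono) auto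
  finally show ?thesis .
qed

end
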